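(* Let $(L,\{\cdot,\cdot,\cdot\},\alpha)$ be a 3-Hom-pre-Lie algebra. Then $(L,[\cdot,\cdot,\cdot]_C,\alpha)$, where $[x,y,z]_C=\{x,y,z\}+\{y,z,x\}+\{z,x,y\}$, is a 3-Hom-Lie algebra.
   Context: A 3-Hom-Lie algebra is a triple $(L,[\cdot,\cdot,\cdot],\alpha)$ with $[\cdot,\cdot,\cdot]:\wedge^3L\to L$ skew-symmetric trilinear and $\alpha:L\to L$ linear satisfying $[\alpha(x),\alpha(y),[u,v,w]]=[[x,y,u],\alpha(v),\alpha(w)]+[\alpha(u),[x,y,v],\alpha(w)]+[\alpha(u),\alpha(v),[x,y,w]]$ for all $x,y,u,v,w\in L$. A 3-Hom-pre-Lie algebra is a triple $(L,\{\cdot,\cdot,\cdot\},\alpha)$ with $\{\cdot,\cdot,\cdot\}:L\otimes L\otimes L\to L$ trilinear and $\alpha:L\to L$ linear such that, with $[x,y,z]_C=\{x,y,z\}+\{y,z,x\}+\{z,x,y\}$, for all $x,y,z,u,v\in L$: $\{x,y,z\}=-\{y,x,z\}$; $\{\alpha(x),\alpha(y),\{z,u,v\}\}=\{[x,y,z]_C,\alpha(u),\alpha(v)\}+\{\alpha(z),[x,y,u]_C,\alpha(v)\}+\{\alpha(z),\alpha(u),\{x,y,v\}\}$; $\{[x,y,z]_C,\alpha(u),\alpha(v)\}=\{\alpha(x),\alpha(y),\{z,u,v\}\}+\{\alpha(y),\alpha(z),\{x,u,v\}\}+\{\alpha(z),\alpha(x),\{y,u,v\}\}$. *)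

theory Defs
  imports Main "HOL.Vector_Spaces"
begin

definition trilinear :: "('k::field \<Rightarrow> 'a::ab_group_add \<Rightarrow> 'a) \<Rightarrow> ('a \<Rightarrow> 'a \<Rightarrow> 'a \<Rightarrow> 'a) \<Rightarrow> bool" where
  "trilinear scale m \<longleftrightarrow>
     (\<forall>y z. Vector_Spaces.linear scale scale (\<lambda>x. m x y z)) \<and>
     (\<forall>x z. Vector_Spaces.linear scale scale (\<lambda>y. m x y z)) \<and>
     (\<forall>x y. Vector_Spaces.linear scale scale (\<lambda>z. m x y z))"

definition skew_symmetric3 :: "('a::ab_group_add \<Rightarrow> 'a \<Rightarrow> 'a \<Rightarrow> 'a) \<Rightarrow> bool" where
  "skew_symmetric3 m \<longleftrightarrow>
     (\<forall>x y z. m x y z = - m y x z) \<and>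
     (\<forall>x y z. m x y z = - m x z y) \<and>
     (\<forall>x y z. m x y z = - m z y x)"

definition hom_lie3 :: "('k::field \<Rightarrow> 'a::ab_group_add \<Rightarrow> 'a) \<Rightarrow> ('a \<Rightarrow> 'a \<Rightarrow> 'a \<Rightarrow> 'a) \<Rightarrow> ('a \<Rightarrow> 'a) \<Rightarrow> bool" where
  "hom_lie3 scale br \<alpha> \<longleftrightarrow>
     vector_space scale \<and> trilinear scale br \<and> skew_symmetric3 br \<and> Vector_Spaces.linear scale scale \<alpha> \<and>
     (\<forall>x y u v w. br (\<alpha> x) (\<alpha> y) (br u v w) =
        br (br x y u) (\<alpha> v) (\<alpha> w) + br (\<alpha> u) (br x y v) (\<alpha> w) + br (\<alpha> u) (\<alpha> v) (br x y w))"

definition comm3 :: "('a::ab_group_add \<Rightarrow> 'a \<Rightarrow> 'a \<Rightarrow> 'a) \<Rightarrow> 'a \<Rightarrow> 'a \<Rightarrow> 'a \<Rightarrow> 'a" where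
  "comm3 m x y z = m x y z + m y z x + m z x y"

definition hom_pre_lie3 :: "('k::field \<Rightarrow> 'a::ab_group_add \<Rightarrow> 'a) \<Rightarrow> ('a \<Rightarrow> 'a \<Rightarrow> 'a \<Rightarrow> 'a) \<Rightarrow> ('a \<Rightarrow> 'a) \<Rightarrow> bool" where
  "hom_pre_lie3 scale m \<alpha> \<longleftrightarrow>
     vector_space scale \<and> trilinear scale m \<and> Vector_Spaces.linear scale scale \<alpha> \<and>
     (\<forall>x y z. m x y z = - m y x z) \<and>
     (\<forall>x y z u v. m (\<alpha> x) (\<alpha> y) (m z u v) =
        m (comm3 m x y z) (\<alpha> u) (\<alpha> v) + m (\<alpha> z) (comm3 m x y u) (\<alpha> v) + m (\<alpha> z) (\<alpha> u) (m x y v)) \<and>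
     (\<forall>x y z u v. m (comm3 m x y z) (\<alpha> u) (\<alpha> v) =
        m (\<alpha> x) (\<alpha> y) (m z u v) + m (\<alpha> y) (\<alpha> z) (m x u v) + m (\<alpha> z) (\<alpha> x) (m y u v))"

end

theory Submission
  imports Defs
begin

lemma lin_add: "Vector_Spaces.linear s s f \<Longrightarrow> f (a + b) = f a + f b"
  by (simp add: linear_iff)

lemma lin_neg: "Vector_Spaces.linear s s (f::'a::ab_group_add \<Rightarrow> 'a) \<Longrightarrow> f (- a) = - f a"
proof -
  assume l: "Vector_Spaces.linear s s f"
  have "f (a + - a) = f a + f (- a)" using lin_add[OF l] .
  moreover have "f 0 = 0" using lin_add[OF l, of 0 0] by simp
  ultimately show ?thesis using minus_unique[of "f a" "f (- a)"] by simp
qed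

lemma lin_plus:
  assumes "Vector_Spaces.linear s s f" "Vector_Spaces.linear s s g"
  shows "Vector_Spaces.linear s s (\<lambda>x. f x + g x)"
proof -
  have vs: "vector_space s" and fa: "\<And>a b. f (a + b) = f a + f b" and fs: "\<And>c a. f (s c a) = s c (f a)"
    and ga: "\<And>a b. g (a + b) = g a + g b" and gs: "\<And>c a. g (s c a) = s c (g a)"
    using assms unfolding linear_iff by blast+
  have d: "\<And>c p q. s c (p + q) = s c p + s c q"
    using vs by (simp add: vector_space_def module.scale_right_distrib)
  show ?thesis unfolding linear_iff using vs by (simp add: fa fs ga gs d ac_simps)
qed

lemma fund:
  fixes m :: "'a::ab_group_add \<Rightarrow> 'a \<Rightarrow> 'a \<Rightarrow> 'a" and \<alpha> :: "'a \<Rightarrow> 'a"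
  assumes ad1: "\<And>a b c d. m (a + b) c d = m a c d + m b c d"
    and ad2: "\<And>a b c d. m c (a + b) d = m c a d + m c b d"
    and ad3: "\<And>a b c d. m c d (a + b) = m c d a + m c d b"
    and ng1: "\<And>a c d. m (- a) c d = - m a c d"
    and ng2: "\<And>a c d. m c (- a) d = - m c a d"
    and ng3: "\<And>a c d. m c d (- a) = - m c d a"
    and sk: "\<And>a b c. m a b c = - m b a c"
    and H1: "\<And>x y z u v. m (\<alpha> x) (\<alpha> y) (m z u v) =
        m (comm3 m x y z) (\<alpha> u) (\<alpha> v) + m (\<alpha> z) (comm3 m x y u) (\<alpha> v) + m (\<alpha> z) (\<alpha> u) (m x y v)"
    and H2: "\<And>x y z u v. m (comm3 m x y z) (\<alpha> u) (\<alpha> v) =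
        m (\<alpha> x) (\<alpha> y) (m z u v) + m (\<alpha> y) (\<alpha> z) (m x u v) + m (\<alpha> z) (\<alpha> x) (m y u v)"
  shows "comm3 m (\<alpha> x) (\<alpha> y) (comm3 m u v w) = comm3 m (comm3 m x y u) (\<alpha> v) (\<alpha> w) + comm3 m (\<alpha> u) (comm3 m x y v) (\<alpha> w) + comm3 m (\<alpha> u) (\<alpha> v) (comm3 m x y w)"
proof -
  have f0: "m (m u w y) (\<alpha> v) (\<alpha> x) - (- m (\<alpha> v) (m u w y) (\<alpha> x)) = 0" using sk[of "(m u w y)" "(\<alpha> v)" "(\<alpha> x)"] by (simp add: ng1 ng2 ng3)
  have f1: "m (m y u w) (\<alpha> v) (\<alpha> x) - (- m (\<alpha> v) (m y u w) (\<alpha> x)) = 0" using sk[of "(m y u w)" "(\<alpha> v)" "(\<alpha> x)"] by (simp add: ng1 ng2 ng3)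
  have f2: "m (\<alpha> x) (\<alpha> w) (m u v y) - (- m (\<alpha> w) (\<alpha> x) (m u v y)) = 0" using sk[of "(\<alpha> x)" "(\<alpha> w)" "(m u v y)"] by (simp add: ng1 ng2 ng3)
  have f3: "m (\<alpha> w) (\<alpha> v) (m u x y) - (- m (\<alpha> v) (\<alpha> w) (m u x y)) = 0" using sk[of "(\<alpha> w)" "(\<alpha> v)" "(m u x y)"] by (simp add: ng1 ng2 ng3)
  have f4: "m (\<alpha> w) (\<alpha> v) (m u x y) - (- m (\<alpha> w) (\<alpha> v) (m x u y)) = 0" using sk[of "u" "x" "y"] by (simp add: ng1 ng2 ng3)
  have f5: "m (\<alpha> u) (\<alpha> w) (m x y v) - (- m (\<alpha> w) (\<alpha> u) (m x y v)) = 0" using sk[of "(\<alpha> u)" "(\<alpha> w)" "(m x y v)"] by (simp add: ng1 ng2 ng3)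
  have f6: "m (\<alpha> x) (m v w u) (\<alpha> y) - (- m (m v w u) (\<alpha> x) (\<alpha> y)) = 0" using sk[of "(\<alpha> x)" "(m v w u)" "(\<alpha> y)"] by (simp add: ng1 ng2 ng3)
  have f7: "m (\<alpha> w) (\<alpha> u) (m y v x) - (- m (\<alpha> u) (\<alpha> w) (m y v x)) = 0" using sk[of "(\<alpha> w)" "(\<alpha> u)" "(m y v x)"] by (simp add: ng1 ng2 ng3)
  have f8: "m (\<alpha> y) (\<alpha> u) (m v w x) - (- m (\<alpha> y) (\<alpha> u) (m w v x)) = 0" using sk[of "v" "w" "x"] by (simp add: ng1 ng2 ng3)
  have f9: "m (\<alpha> y) (\<alpha> x) (m u w v) - (- m (\<alpha> x) (\<alpha> y) (m u w v)) = 0" using sk[of "(\<alpha> y)" "(\<alpha> x)" "(m u w v)"] by (simp add: ng1 ng2 ng3)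
  have f10: "m (\<alpha> y) (\<alpha> x) (m u w v) - (- m (\<alpha> y) (\<alpha> x) (m w u v)) = 0" using sk[of "u" "w" "v"] by (simp add: ng1 ng2 ng3)
  have f11: "m (\<alpha> w) (m x y u) (\<alpha> v) - (- m (m x y u) (\<alpha> w) (\<alpha> v)) = 0" using sk[of "(\<alpha> w)" "(m x y u)" "(\<alpha> v)"] by (simp add: ng1 ng2 ng3)
  have f12: "m (\<alpha> v) (\<alpha> u) (m w x y) - (- m (\<alpha> u) (\<alpha> v) (m w x y)) = 0" using sk[of "(\<alpha> v)" "(\<alpha> u)" "(m w x y)"] by (simp add: ng1 ng2 ng3)
  have f13: "m (\<alpha> v) (\<alpha> u) (m w x y) - (- m (\<alpha> v) (\<alpha> u) (m x w y)) = 0" using sk[of "w" "x" "y"] by (simp add: ng1 ng2 ng3)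
  have f14: "m (m u w x) (\<alpha> v) (\<alpha> y) - (- m (\<alpha> v) (m u w x) (\<alpha> y)) = 0" using sk[of "(m u w x)" "(\<alpha> v)" "(\<alpha> y)"] by (simp add: ng1 ng2 ng3)
  have f15: "m (\<alpha> x) (\<alpha> u) (m v w y) - (- m (\<alpha> x) (\<alpha> u) (m w v y)) = 0" using sk[of "v" "w" "y"] by (simp add: ng1 ng2 ng3)
  have f16: "m (\<alpha> u) (\<alpha> v) (m x w y) - (- m (\<alpha> v) (\<alpha> u) (m x w y)) = 0" using sk[of "(\<alpha> u)" "(\<alpha> v)" "(m x w y)"] by (simp add: ng1 ng2 ng3)
  have f17: "m (\<alpha> v) (m x u w) (\<alpha> y) - (- m (m x u w) (\<alpha> v) (\<alpha> y)) = 0" using sk[of "(\<alpha> v)" "(m x u w)" "(\<alpha> y)"] by (simp add: ng1 ng2 ng3)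
  have f18: "m (\<alpha> v) (m w y u) (\<alpha> x) - (- m (m w y u) (\<alpha> v) (\<alpha> x)) = 0" using sk[of "(\<alpha> v)" "(m w y u)" "(\<alpha> x)"] by (simp add: ng1 ng2 ng3)
  have f19: "m (\<alpha> u) (m w y x) (\<alpha> v) - (- m (m w y x) (\<alpha> u) (\<alpha> v)) = 0" using sk[of "(\<alpha> u)" "(m w y x)" "(\<alpha> v)"] by (simp add: ng1 ng2 ng3)
  have f20: "m (\<alpha> u) (m w y x) (\<alpha> v) - (- m (\<alpha> u) (m y w x) (\<alpha> v)) = 0" using sk[of "w" "y" "x"] by (simp add: ng1 ng2 ng3)
  have f21: "m (m w x y) (\<alpha> u) (\<alpha> v) - (- m (\<alpha> u) (m w x y) (\<alpha> v)) = 0" using sk[of "(m w x y)" "(\<alpha> u)" "(\<alpha> v)"] by (simp add: ng1 ng2 ng3)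
  have f22: "m (m v u w) (\<alpha> x) (\<alpha> y) - (- m (\<alpha> x) (m v u w) (\<alpha> y)) = 0" using sk[of "(m v u w)" "(\<alpha> x)" "(\<alpha> y)"] by (simp add: ng1 ng2 ng3)
  have f23: "m (m v u w) (\<alpha> x) (\<alpha> y) - (- m (m u v w) (\<alpha> x) (\<alpha> y)) = 0" using sk[of "v" "u" "w"] by (simp add: ng1 ng2 ng3)
  have f24: "m (\<alpha> x) (m v u w) (\<alpha> y) - (- m (\<alpha> x) (m u v w) (\<alpha> y)) = 0" using sk[of "v" "u" "w"] by (simp add: ng1 ng2 ng3)
  have f25: "m (\<alpha> u) (\<alpha> w) (m v x y) - (- m (\<alpha> w) (\<alpha> u) (m v x y)) = 0" using sk[of "(\<alpha> u)" "(\<alpha> w)" "(m v x y)"] by (simp add: ng1 ng2 ng3)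
  have f26: "m (\<alpha> u) (\<alpha> w) (m v x y) - (- m (\<alpha> u) (\<alpha> w) (m x v y)) = 0" using sk[of "v" "x" "y"] by (simp add: ng1 ng2 ng3)
  have f27: "m (\<alpha> w) (\<alpha> y) (m u v x) - (- m (\<alpha> y) (\<alpha> w) (m u v x)) = 0" using sk[of "(\<alpha> w)" "(\<alpha> y)" "(m u v x)"] by (simp add: ng1 ng2 ng3)
  have f28: "m (m w y x) (\<alpha> u) (\<alpha> v) - (- m (m y w x) (\<alpha> u) (\<alpha> v)) = 0" using sk[of "w" "y" "x"] by (simp add: ng1 ng2 ng3)
  have f29: "m (\<alpha> w) (m y u x) (\<alpha> v) - (- m (m y u x) (\<alpha> w) (\<alpha> v)) = 0" using sk[of "(\<alpha> w)" "(m y u x)" "(\<alpha> v)"] by (simp add: ng1 ng2 ng3)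
  have f30: "m (m w u v) (\<alpha> x) (\<alpha> y) - (- m (\<alpha> x) (m w u v) (\<alpha> y)) = 0" using sk[of "(m w u v)" "(\<alpha> x)" "(\<alpha> y)"] by (simp add: ng1 ng2 ng3)
  have f31: "m (\<alpha> y) (\<alpha> x) (m w u v) - (- m (\<alpha> x) (\<alpha> y) (m w u v)) = 0" using sk[of "(\<alpha> y)" "(\<alpha> x)" "(m w u v)"] by (simp add: ng1 ng2 ng3)
  have f32: "m (\<alpha> w) (\<alpha> v) (m x u y) - (- m (\<alpha> v) (\<alpha> w) (m x u y)) = 0" using sk[of "(\<alpha> w)" "(\<alpha> v)" "(m x u y)"] by (simp add: ng1 ng2 ng3)
  have f33: "m (\<alpha> u) (m y x w) (\<alpha> v) - (- m (m y x w) (\<alpha> u) (\<alpha> v)) = 0" using sk[of "(\<alpha> u)" "(m y x w)" "(\<alpha> v)"] by (simp add: ng1 ng2 ng3)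
  have f34: "m (\<alpha> u) (m y x w) (\<alpha> v) - (- m (\<alpha> u) (m x y w) (\<alpha> v)) = 0" using sk[of "y" "x" "w"] by (simp add: ng1 ng2 ng3)
  have f35: "m (m u x y) (\<alpha> w) (\<alpha> v) - (- m (\<alpha> w) (m u x y) (\<alpha> v)) = 0" using sk[of "(m u x y)" "(\<alpha> w)" "(\<alpha> v)"] by (simp add: ng1 ng2 ng3)
  have f36: "m (m y x w) (\<alpha> u) (\<alpha> v) - (- m (m x y w) (\<alpha> u) (\<alpha> v)) = 0" using sk[of "y" "x" "w"] by (simp add: ng1 ng2 ng3)
  have f37: "m (\<alpha> v) (m w x u) (\<alpha> y) - (- m (m w x u) (\<alpha> v) (\<alpha> y)) = 0" using sk[of "(\<alpha> v)" "(m w x u)" "(\<alpha> y)"] by (simp add: ng1 ng2 ng3)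
  have f38: "m (\<alpha> x) (\<alpha> y) (m u v w) - (m (comm3 m x y u) (\<alpha> v) (\<alpha> w) + m (\<alpha> u) (comm3 m x y v) (\<alpha> w) + m (\<alpha> u) (\<alpha> v) (m x y w)) = 0" by (simp add: H1[of x y u v w])
  have f39: "m (\<alpha> x) (\<alpha> y) (m u w v) - (m (comm3 m x y u) (\<alpha> w) (\<alpha> v) + m (\<alpha> u) (comm3 m x y w) (\<alpha> v) + m (\<alpha> u) (\<alpha> w) (m x y v)) = 0" by (simp add: H1[of x y u w v])
  have f40: "m (\<alpha> x) (\<alpha> y) (m v w u) - (m (comm3 m x y v) (\<alpha> w) (\<alpha> u) + m (\<alpha> v) (comm3 m x y w) (\<alpha> u) + m (\<alpha> v) (\<alpha> w) (m x y u)) = 0" by (simp add: H1[of x y v w u])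
  have f41: "m (\<alpha> x) (\<alpha> u) (m v w y) - (m (comm3 m x u v) (\<alpha> w) (\<alpha> y) + m (\<alpha> v) (comm3 m x u w) (\<alpha> y) + m (\<alpha> v) (\<alpha> w) (m x u y)) = 0" by (simp add: H1[of x u v w y])
  have f42: "m (comm3 m x u w) (\<alpha> v) (\<alpha> y) - (m (\<alpha> x) (\<alpha> u) (m w v y) + m (\<alpha> u) (\<alpha> w) (m x v y) + m (\<alpha> w) (\<alpha> x) (m u v y)) = 0" by (simp add: H2[of x u w v y])
  have f43: "m (\<alpha> y) (\<alpha> u) (m v w x) - (m (comm3 m y u v) (\<alpha> w) (\<alpha> x) + m (\<alpha> v) (comm3 m y u w) (\<alpha> x) + m (\<alpha> v) (\<alpha> w) (m y u x)) = 0" by (simp add: H1[of y u v w x])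
  have f44: "m (comm3 m y u w) (\<alpha> v) (\<alpha> x) - (m (\<alpha> y) (\<alpha> u) (m w v x) + m (\<alpha> u) (\<alpha> w) (m y v x) + m (\<alpha> w) (\<alpha> y) (m u v x)) = 0" by (simp add: H2[of y u w v x])
  have f45: "m (\<alpha> u) (\<alpha> v) (m x w y) - (m (comm3 m u v x) (\<alpha> w) (\<alpha> y) + m (\<alpha> x) (comm3 m u v w) (\<alpha> y) + m (\<alpha> x) (\<alpha> w) (m u v y)) = 0" by (simp add: H1[of u v x w y])
  have f46: "m (\<alpha> u) (\<alpha> v) (m y w x) - (m (comm3 m u v y) (\<alpha> w) (\<alpha> x) + m (\<alpha> y) (comm3 m u v w) (\<alpha> x) + m (\<alpha> y) (\<alpha> w) (m u v x)) = 0" by (simp add: H1[of u v y w x])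
  have e: "(comm3 m (\<alpha> x) (\<alpha> y) (comm3 m u v w)) - (comm3 m (comm3 m x y u) (\<alpha> v) (\<alpha> w) + comm3 m (\<alpha> u) (comm3 m x y v) (\<alpha> w) + comm3 m (\<alpha> u) (\<alpha> v) (comm3 m x y w)) = (m (m u w y) (\<alpha> v) (\<alpha> x) - (- m (\<alpha> v) (m u w y) (\<alpha> x))) + (m (m y u w) (\<alpha> v) (\<alpha> x) - (- m (\<alpha> v) (m y u w) (\<alpha> x))) + (m (\<alpha> x) (\<alpha> w) (m u v y) - (- m (\<alpha> w) (\<alpha> x) (m u v y))) - (m (\<alpha> w) (\<alpha> v) (m u x y) - (- m (\<alpha> v) (\<alpha> w) (m u x y))) + (m (\<alpha> w) (\<alpha> v) (m u x y) - (- m (\<alpha> w) (\<alpha> v) (m x u y))) - (m (\<alpha> u) (\<alpha> w) (m x y v) - (- m (\<alpha> w) (\<alpha> u) (m x y v))) + (m (\<alpha> x) (m v w u) (\<alpha> y) - (- m (m v w u) (\<alpha> x) (\<alpha> y))) - (m (\<alpha> w) (\<alpha> u) (m y v x) - (- m (\<alpha> u) (\<alpha> w) (m y v x))) - (m (\<alpha> y) (\<alpha> u) (m v w x) - (- m (\<alpha> y) (\<alpha> u) (m w v x))) + (m (\<alpha> y) (\<alpha> x) (m u w v) - (- m (\<alpha> x) (\<alpha> y) (m u w v))) - (m (\<alpha> y) (\<alpha> x) (m u w v) - (- m (\<alpha> y) (\<alpha> x) (m w u v))) - (m (\<alpha> w) (m x y u) (\<alpha> v) - (- m (m x y u) (\<alpha>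 w) (\<alpha> v))) - (m (\<alpha> v) (\<alpha> u) (m w x y) - (- m (\<alpha> u) (\<alpha> v) (m w x y))) + (m (\<alpha> v) (\<alpha> u) (m w x y) - (- m (\<alpha> v) (\<alpha> u) (m x w y))) - (m (m u w x) (\<alpha> v) (\<alpha> y) - (- m (\<alpha> v) (m u w x) (\<alpha> y))) + (m (\<alpha> x) (\<alpha> u) (m v w y) - (- m (\<alpha> x) (\<alpha> u) (m w v y))) - (m (\<alpha> u) (\<alpha> v) (m x w y) - (- m (\<alpha> v) (\<alpha> u) (m x w y))) - (m (\<alpha> v) (m x u w) (\<alpha> y) - (- m (m x u w) (\<alpha> v) (\<alpha> y))) + (m (\<alpha> v) (m w y u) (\<alpha> x) - (- m (m w y u) (\<alpha> v) (\<alpha> x))) + (m (\<alpha> u) (m w y x) (\<alpha> v) - (- m (m w y x) (\<alpha> u) (\<alpha> v))) - (m (\<alpha> u) (m w y x) (\<alpha> v) - (- m (\<alpha> u) (m y w x) (\<alpha> v))) - (m (m w x y) (\<alpha> u) (\<alpha> v) - (- m (\<alpha> u) (m w x y) (\<alpha> v))) - (m (m v u w) (\<alpha> x) (\<alpha> y) - (- m (\<alpha> x) (m v u w) (\<alpha> y))) + (m (m v u w) (\<alpha> x) (\<alpha> y) - (- m (m u v w) (\<alpha> x) (\<alpha> y))) + (m (\<alpha> x) (m v u w) (\<alpha> y) - (- m (\<alpha> x) (m u v w) (\<alpha> y))) - (m (\<alpha> u) (\<alpha> w) (m v x y) - (- m (\<alpha> w) (\<alpha> u) (m v x y))) + (m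 (\<alpha> u) (\<alpha> w) (m v x y) - (- m (\<alpha> u) (\<alpha> w) (m x v y))) - (m (\<alpha> w) (\<alpha> y) (m u v x) - (- m (\<alpha> y) (\<alpha> w) (m u v x))) - (m (m w y x) (\<alpha> u) (\<alpha> v) - (- m (m y w x) (\<alpha> u) (\<alpha> v))) - (m (\<alpha> w) (m y u x) (\<alpha> v) - (- m (m y u x) (\<alpha> w) (\<alpha> v))) + (m (m w u v) (\<alpha> x) (\<alpha> y) - (- m (\<alpha> x) (m w u v) (\<alpha> y))) + (m (\<alpha> y) (\<alpha> x) (m w u v) - (- m (\<alpha> x) (\<alpha> y) (m w u v))) - (m (\<alpha> w) (\<alpha> v) (m x u y) - (- m (\<alpha> v) (\<alpha> w) (m x u y))) + (m (\<alpha> u) (m y x w) (\<alpha> v) - (- m (m y x w) (\<alpha> u) (\<alpha> v))) - (m (\<alpha> u) (m y x w) (\<alpha> v) - (- m (\<alpha> u) (m x y w) (\<alpha> v))) - (m (m u x y) (\<alpha> w) (\<alpha> v) - (- m (\<alpha> w) (m u x y) (\<alpha> v))) - (m (m y x w) (\<alpha> u) (\<alpha> v) - (- m (m x y w) (\<alpha> u) (\<alpha> v))) - (m (\<alpha> v) (m w x u) (\<alpha> y) - (- m (m w x u) (\<alpha> v) (\<alpha> y))) + (m (\<alpha> x) (\<alpha> y) (m u v w) - (m (comm3 m x y u) (\<alpha> v) (\<alpha> w) + m (\<alpha> u) (comm3 m x y v) (\<alpha> w) + m (\<alpha> u) (\<alpha> v) (m x y w))) - (m (\<alpha> x) (\<alpha>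 y) (m u w v) - (m (comm3 m x y u) (\<alpha> w) (\<alpha> v) + m (\<alpha> u) (comm3 m x y w) (\<alpha> v) + m (\<alpha> u) (\<alpha> w) (m x y v))) + (m (\<alpha> x) (\<alpha> y) (m v w u) - (m (comm3 m x y v) (\<alpha> w) (\<alpha> u) + m (\<alpha> v) (comm3 m x y w) (\<alpha> u) + m (\<alpha> v) (\<alpha> w) (m x y u))) - (m (\<alpha> x) (\<alpha> u) (m v w y) - (m (comm3 m x u v) (\<alpha> w) (\<alpha> y) + m (\<alpha> v) (comm3 m x u w) (\<alpha> y) + m (\<alpha> v) (\<alpha> w) (m x u y))) + (m (comm3 m x u w) (\<alpha> v) (\<alpha> y) - (m (\<alpha> x) (\<alpha> u) (m w v y) + m (\<alpha> u) (\<alpha> w) (m x v y) + m (\<alpha> w) (\<alpha> x) (m u v y))) + (m (\<alpha> y) (\<alpha> u) (m v w x) - (m (comm3 m y u v) (\<alpha> w) (\<alpha> x) + m (\<alpha> v) (comm3 m y u w) (\<alpha> x) + m (\<alpha> v) (\<alpha> w) (m y u x))) - (m (comm3 m y u w) (\<alpha> v) (\<alpha> x) - (m (\<alpha> y) (\<alpha> u) (m w v x) + m (\<alpha> u) (\<alpha> w) (m y v x) + m (\<alpha> w) (\<alpha> y) (m u v x))) + (m (\<alpha> u) (\<alpha> v) (m x w y) - (m (comm3 m u v x) (\<alpha> w) (\<alpha> y) + m (\<alpha> x) (comm3 m u v w) (\<alpha> y) + m (\<alpha> x) (\<alpha> w) (m u v y))) - (m (\<alpha> u) (\<alpha> v)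 (m y w x) - (m (comm3 m u v y) (\<alpha> w) (\<alpha> x) + m (\<alpha> y) (comm3 m u v w) (\<alpha> x) + m (\<alpha> y) (\<alpha> w) (m u v x)))"
    unfolding comm3_def by (simp only: ad1 ad2 ad3) simp
  have "(comm3 m (\<alpha> x) (\<alpha> y) (comm3 m u v w)) - (comm3 m (comm3 m x y u) (\<alpha> v) (\<alpha> w) + comm3 m (\<alpha> u) (comm3 m x y v) (\<alpha> w) + comm3 m (\<alpha> u) (\<alpha> v) (comm3 m x y w)) = 0" using e[unfolded f0 f1 f2 f3 f4 f5 f6 f7 f8 f9 f10 f11 f12 f13 f14 f15 f16 f17 f18 f19 f20 f21 f22 f23 f24 f25 f26 f27 f28 f29 f30 f31 f32 f33 f34 f35 f36 f37 f38 f39 f40 f41 f42 f43 f44 f45 f46] by simp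
  then show ?thesis by simp
qed

theorem proposition3p4:
  fixes scale :: "'k::field \<Rightarrow> 'a::ab_group_add \<Rightarrow> 'a"
    and m :: "'a \<Rightarrow> 'a \<Rightarrow> 'a \<Rightarrow> 'a" and \<alpha> :: "'a \<Rightarrow> 'a"
  assumes "hom_pre_lie3 scale m \<alpha>"
  shows "hom_lie3 scale (comm3 m) \<alpha>"
proof -
  have vs: "vector_space scale" and tl: "trilinear scale m" and la: "Vector_Spaces.linear scale scale \<alpha>"
    and sk: "\<And>a b c. m a b c = - m b a c"
    and H1: "\<And>x y z u v. m (\<alpha> x) (\<alpha> y) (m z u v) =
        m (comm3 m x y z) (\<alpha> u) (\<alpha> v) + m (\<alpha> z) (comm3 m x y u) (\<alpha> v) + m (\<alpha> z) (\<alpha> u) (m x y v)"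
    and H2: "\<And>x y z u v. m (comm3 m x y z) (\<alpha> u) (\<alpha> v) =
        m (\<alpha> x) (\<alpha> y) (m z u v) + m (\<alpha> y) (\<alpha> z) (m x u v) + m (\<alpha> z) (\<alpha> x) (m y u v)"
    using assms unfolding hom_pre_lie3_def by blast+
  have l1: "\<And>b c. Vector_Spaces.linear scale scale (\<lambda>a. m a b c)"
    and l2: "\<And>a c. Vector_Spaces.linear scale scale (\<lambda>b. m a b c)"
    and l3: "\<And>a b. Vector_Spaces.linear scale scale (\<lambda>c. m a b c)"
    using tl unfolding trilinear_def by auto
  have ad1: "\<And>a b c d. m (a + b) c d = m a c d + m b c d" using lin_add[OF l1] .
  have ad2: "\<And>a b c d. m c (a + b) d = m c a d + m c b d" using lin_add[OF l2] .
  have ad3: "\<And>a b c d. m c d (a + b) = m c d a + m c d b" using lin_add[OF l3] .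
  have ng1: "\<And>a c d. m (- a) c d = - m a c d" using lin_neg[OF l1] .
  have ng2: "\<And>a c d. m c (- a) d = - m c a d" using lin_neg[OF l2] .
  have ng3: "\<And>a c d. m c d (- a) = - m c d a" using lin_neg[OF l3] .
  have t1: "\<And>b c. Vector_Spaces.linear scale scale (\<lambda>a. comm3 m a b c)"
    unfolding comm3_def by (rule lin_plus[OF lin_plus[OF l1 l3] l2])
  have t2: "\<And>a c. Vector_Spaces.linear scale scale (\<lambda>b. comm3 m a b c)"
    unfolding comm3_def by (rule lin_plus[OF lin_plus[OF l2 l1] l3])
  have t3: "\<And>a b. Vector_Spaces.linear scale scale (\<lambda>c. comm3 m a b c)"
    unfolding comm3_def by (rule lin_plus[OF lin_plus[OF l3 l2] l1])
  have tri: "trilinear scale (comm3 m)"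
    unfolding trilinear_def using t1 t2 t3 by blast
  have skc: "skew_symmetric3 (comm3 m)"
    unfolding skew_symmetric3_def comm3_def
  proof (intro conjI allI)
    fix x y z
    show "m x y z + m y z x + m z x y = - (m y x z + m x z y + m z y x)" unfolding sk[of y x z] sk[of x z y] sk[of z y x] by (simp add: algebra_simps)
    show "m x y z + m y z x + m z x y = - (m x z y + m z y x + m y x z)" unfolding sk[of y x z] sk[of x z y] sk[of z y x] by (simp add: algebra_simps)
    show "m x y z + m y z x + m z x y = - (m z y x + m y x z + m x z y)" unfolding sk[of y x z] sk[of x z y] sk[of z y x] by (simp add: algebra_simps)
  qed
  have fi: "\<forall>x y u v w. comm3 m (\<alpha> x) (\<alpha> y) (comm3 m u v w) =
        comm3 m (comm3 m x y u) (\<alpha> v) (\<alpha> w) + comm3 m (\<alpha> u) (comm3 m x y v) (\<alpha> w) + comm3 m (\<alpha> u) (\<alpha> v) (comm3 m x y w)"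
    by (intro allI fund[of m, OF ad1 ad2 ad3 ng1 ng2 ng3 sk H1 H2])
  show ?thesis unfolding hom_lie3_def by (intro conjI vs tri skc la fi)
qed

end
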